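(* For a positive integer $k$ let $A(k)=\{(\frac{c}{k},\frac{d}{k}): c,d\in\mathbb{N}\cup\{0\},\ \frac{c}{k}+\frac{d}{k}\le 1\}$, viewed as a collection of alternatives. Let $x\approx 0.39$ be the unique solution in $[0,\frac12]$ of $x^3-x+\frac13=0$. Then for every $k$ and every $\delta>0$, all pure Nash equilibrium outcomes of $\Gamma_{\mathcal{SA}_\delta}(A(k))$ are $(\delta+\frac1k)$-close to the segment $\mathrm{conv}((x,1-x),(1-x,x))$.
   Context: Two players bargain over a finite collection of alternatives $A=(a^j)_{j\in[n]}\subset[0,1]^2$, $a^j_i$ being player $i$'s utility. The mechanism $\mathcal{SA}_\delta$ ($0<\delta\le1$): each player submits $L_i\subseteq[n]$; the index is drawn from the uniform distribution $UN([n])$ if $L_1=L_2=\emptyset$; from $UN(L_1\cup L_2)$ if $L_1\cap L_2=\emptyset\ne L_1\cup L_2$; and from $(1-\delta)UN(L_1\cap L_2)+\delta\,UN(L_1\cup L_2)$ if $L_1\cap L_2\neq\emptyset$. With risk-neutral players this defines a game $\Gamma_{\mathcal{SA}_\delta}(A)$ with expected-utility payoffs; an equilibrium outcome is the vector of expected utilities. *)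

theory Defs
  imports "HOL-Analysis.Analysis"
begin

text \<open>Alternatives are given by a finite nonempty index set I and a utility map
  a : I \<rightarrow> [0,1]^2 (first component = player 1, second = player 2).\<close>

definition unif_avg :: "'i set \<Rightarrow> ('i \<Rightarrow> real \<times> real) \<Rightarrow> real \<times> real" where
  "unif_avg J a = (1 / real (card J)) *\<^sub>R (\<Sum>j\<in>J. a j)"

text \<open>Expected utility vector of the mechanism SA_delta when the players submit L1, L2.\<close>

definition SA_outcome ::
  "real \<Rightarrow> 'i set \<Rightarrow> ('i \<Rightarrow> real \<times> real) \<Rightarrow> 'i set \<Rightarrow> 'i set \<Rightarrow> real \<times> real" where
  "SA_outcome \<delta> I a L1 L2 =
     (if L1 = {} \<and> L2 = {} then unif_avg I a
      else if L1 \<inter> L2 = {} then unif_avg (L1 \<union> L2) a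
      else (1 - \<delta>) *\<^sub>R unif_avg (L1 \<inter> L2) a + \<delta> *\<^sub>R unif_avg (L1 \<union> L2) a)"

definition SA_pure_NE ::
  "real \<Rightarrow> 'i set \<Rightarrow> ('i \<Rightarrow> real \<times> real) \<Rightarrow> 'i set \<Rightarrow> 'i set \<Rightarrow> bool" where
  "SA_pure_NE \<delta> I a L1 L2 \<longleftrightarrow>
     L1 \<subseteq> I \<and> L2 \<subseteq> I \<and>
     (\<forall>L1'. L1' \<subseteq> I \<longrightarrow> fst (SA_outcome \<delta> I a L1' L2) \<le> fst (SA_outcome \<delta> I a L1 L2)) \<and>
     (\<forall>L2'. L2' \<subseteq> I \<longrightarrow> snd (SA_outcome \<delta> I a L1 L2') \<le> snd (SA_outcome \<delta> I a L1 L2))"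

definition Ak_index :: "nat \<Rightarrow> (nat \<times> nat) set" where
  "Ak_index k = {(c, d). c + d \<le> k}"

definition Ak_util :: "nat \<Rightarrow> nat \<times> nat \<Rightarrow> real \<times> real" where
  "Ak_util k p = (real (fst p) / real k, real (snd p) / real k)"

end

theory Submission
  imports Defs
begin


definition av :: "('a \<Rightarrow> real) \<Rightarrow> 'a set \<Rightarrow> real" where
  "av f T = sum f T / real (card T)"

lemma fst_unif: "fst (unif_avg J a) = av (\<lambda>p. fst (a p)) J"
  by (simp add: unif_avg_def av_def fst_sum)
lemma snd_unif: "snd (unif_avg J a) = av (\<lambda>p. snd (a p)) J"
  by (simp add: unif_avg_def av_def snd_sum)

lemma fst_out: "fst (SA_outcome \<delta> I a L1 L2) =
  (if L1 = {} \<and> L2 = {} then av (\<lambda>p. fst (a p)) I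
   else if L1 \<inter> L2 = {} then av (\<lambda>p. fst (a p)) (L1 \<union> L2)
   else (1 - \<delta>) * av (\<lambda>p. fst (a p)) (L1 \<inter> L2) + \<delta> * av (\<lambda>p. fst (a p)) (L1 \<union> L2))"
  by (simp add: SA_outcome_def fst_unif)
lemma snd_out: "snd (SA_outcome \<delta> I a L1 L2) =
  (if L1 = {} \<and> L2 = {} then av (\<lambda>p. snd (a p)) I
   else if L1 \<inter> L2 = {} then av (\<lambda>p. snd (a p)) (L1 \<union> L2)
   else (1 - \<delta>) * av (\<lambda>p. snd (a p)) (L1 \<inter> L2) + \<delta> * av (\<lambda>p. snd (a p)) (L1 \<union> L2))"
  by (simp add: SA_outcome_def snd_unif)

definition swp :: "('i \<Rightarrow> real \<times> real) \<Rightarrow> 'i \<Rightarrow> real \<times> real" where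
  "swp a = (\<lambda>p. prod.swap (a p))"

lemma swp_out1: "fst (SA_outcome \<delta> I (swp a) L2 L1) = snd (SA_outcome \<delta> I a L1 L2)"
  by (simp add: fst_out snd_out swp_def Int_commute Un_commute conj_commute)
lemma swp_out2: "snd (SA_outcome \<delta> I (swp a) L2 L1) = fst (SA_outcome \<delta> I a L1 L2)"
  by (simp add: fst_out snd_out swp_def Int_commute Un_commute conj_commute)

lemma NE_swp: "SA_pure_NE \<delta> I a L1 L2 \<Longrightarrow> SA_pure_NE \<delta> I (swp a) L2 L1"
  unfolding SA_pure_NE_def swp_out1 swp_out2 by blast

lemma av_single[simp]: "av f {j} = f j" by (simp add: av_def)

lemma av_ins_le:
  assumes "finite T" "T \<noteq> {}" "j \<notin> T" "av f (insert j T) \<le> av f T"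
  shows "f j \<le> av f T"
proof -
  define n where "n = real (card T)"
  define s where "s = sum f T"
  have n: "n > 0" using assms(1,2) by (simp add: card_gt_0_iff n_def)
  have "(s + f j) / (n + 1) \<le> s / n"
    using assms by (simp add: av_def add.commute n_def s_def)
  hence "(s + f j) * n \<le> s * (n + 1)"
    using n by (simp add: pos_divide_le_eq pos_le_divide_eq mult.commute mult.left_commute divide_le_eq le_divide_eq)
  hence "f j * n \<le> s" by (simp add: algebra_simps)
  hence "f j \<le> s / n" using n by (simp add: pos_le_divide_eq)
  thus ?thesis by (simp add: av_def n_def s_def)
qed

lemma av_rem_le:
  assumes "finite T" "j \<in> T" "T - {j} \<noteq> {}" "av f (T - {j}) \<le> av f T"
  shows "av f T \<le> f j"
proof -
  obtain T' where T1: "T = insert j T'" and T2: "j \<notin> T'"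
    using mk_disjoint_insert[OF assms(2)] by blast
  have T3: "finite T'" using assms(1) T1 by simp
  have TT: "T - {j} = T'" using T1 T2 by auto
  define n where "n = real (card T')"
  define s where "s = sum f T'"
  have n: "n > 0" using T3 assms(3) TT unfolding n_def by (simp add: card_gt_0_iff)
  have a4: "av f T' \<le> av f (insert j T')" using assms(4) unfolding TT by (simp add: T1)
  have "s / n \<le> (s + f j) / (n + 1)"
    using a4 T2 T3 by (simp add: av_def add.commute n_def s_def)
  hence "s * (n + 1) \<le> (s + f j) * n"
    using n by (simp add: divide_le_eq le_divide_eq)
  hence le: "s \<le> f j * n" by (simp add: algebra_simps)
  have "(s + f j) \<le> f j * (n + 1)" using le by (simp add: algebra_simps)
  hence "(s + f j) / (n + 1) \<le> f j" using n by (simp add: pos_divide_le_eq)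
  thus ?thesis using T2 T3 unfolding T1 by (simp add: av_def add.commute n_def s_def)
qed

lemma av_all_ge:
  assumes "finite T" "\<forall>j\<in>T. av f T \<le> f j" "j \<in> T"
  shows "f j = av f T"
proof -
  have n: "real (card T) > 0" using assms by (auto simp: card_gt_0_iff)
  have s: "(\<Sum>i\<in>T. f i - av f T) = 0"
    using n by (simp add: sum_subtractf av_def)
  have "\<forall>i\<in>T. f i - av f T = 0"
    using sum_nonneg_eq_0_iff[OF assms(1), of "\<lambda>i. f i - av f T"] s assms(2) by auto
  thus ?thesis using assms(3) by auto
qed


lemma fo_e: "L1 \<union> L2 \<noteq> {} \<Longrightarrow> L1 \<inter> L2 = {} \<Longrightarrow>
   fst (SA_outcome \<delta> I a L1 L2) = av (\<lambda>p. fst (a p)) (L1 \<union> L2)"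
  by (auto simp: fst_out)
lemma fo_n: "L1 \<inter> L2 \<noteq> {} \<Longrightarrow>
   fst (SA_outcome \<delta> I a L1 L2) = (1 - \<delta>) * av (\<lambda>p. fst (a p)) (L1 \<inter> L2) + \<delta> * av (\<lambda>p. fst (a p)) (L1 \<union> L2)"
  by (auto simp: fst_out)

lemma NE_dev1:
  assumes "SA_pure_NE \<delta> I a L1 L2" "L1' \<subseteq> I"
  shows "fst (SA_outcome \<delta> I a L1' L2) \<le> fst (SA_outcome \<delta> I a L1 L2)"
  using assms unfolding SA_pure_NE_def by blast

lemma P0:
  assumes "SA_pure_NE \<delta> I a {} {}" "j \<in> I"
  shows "fst (a j) \<le> av (\<lambda>p. fst (a p)) I"
  using NE_dev1[OF assms(1), of "{j}"] assms(2) by (simp add: fst_out)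

lemma P1:
  assumes fin: "finite I" and NE: "SA_pure_NE \<delta> I a L1 L2" and d: "0 < \<delta>"
    and U: "L1 \<union> L2 \<noteq> {}" and j: "j \<in> I" "j \<notin> L1 \<union> L2"
  shows "fst (a j) \<le> av (\<lambda>p. fst (a p)) (L1 \<union> L2)"
proof -
  let ?f = "\<lambda>p. fst (a p)"
  have sub: "L1 \<subseteq> I" "L2 \<subseteq> I" using NE unfolding SA_pure_NE_def by auto
  have finU: "finite (L1 \<union> L2)" using sub fin finite_subset by blast
  have dev: "fst (SA_outcome \<delta> I a (insert j L1) L2) \<le> fst (SA_outcome \<delta> I a L1 L2)"
    using NE_dev1[OF NE, of "insert j L1"] sub j by auto
  have e1: "insert j L1 \<inter> L2 = L1 \<inter> L2" "insert j L1 \<union> L2 = insert j (L1 \<union> L2)"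
    using j by auto
  have "av ?f (insert j (L1 \<union> L2)) \<le> av ?f (L1 \<union> L2)"
  proof (cases "L1 \<inter> L2 = {}")
    case True
    have "fst (SA_outcome \<delta> I a (insert j L1) L2) = av ?f (insert j (L1 \<union> L2))"
      using fo_e[of "insert j L1" L2] True e1 by auto
    moreover have "fst (SA_outcome \<delta> I a L1 L2) = av ?f (L1 \<union> L2)"
      using fo_e[of L1 L2] True U by auto
    ultimately show ?thesis using dev by simp
  next
    case False
    have "fst (SA_outcome \<delta> I a (insert j L1) L2) = (1 - \<delta>) * av ?f (L1 \<inter> L2) + \<delta> * av ?f (insert j (L1 \<union> L2))"
      using fo_n[of "insert j L1" L2] False e1 by auto
    moreover have "fst (SA_outcome \<delta> I a L1 L2) = (1 - \<delta>) * av ?f (L1 \<inter> L2) + \<delta> * av ?f (L1 \<union> L2)"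
      using fo_n[of L1 L2] False by auto
    ultimately show ?thesis using dev d by simp
  qed
  thus ?thesis using av_ins_le[OF finU U] j by blast
qed

lemma P2:
  assumes fin: "finite I" and NE: "SA_pure_NE \<delta> I a L1 L2" and d: "0 < \<delta>"
    and j: "j \<in> L1" "j \<notin> L2"
  shows "av (\<lambda>p. fst (a p)) (L1 \<union> L2) \<le> fst (a j)"
proof -
  let ?f = "\<lambda>p. fst (a p)"
  have sub: "L1 \<subseteq> I" "L2 \<subseteq> I" using NE unfolding SA_pure_NE_def by auto
  have finU: "finite (L1 \<union> L2)" using sub fin finite_subset by blast
  show ?thesis
  proof (cases "(L1 \<union> L2) - {j} = {}")
    case True
    hence "L1 \<union> L2 = {j}" using j by auto
    thus ?thesis by simp
  next
    case ne: False
    have dev: "fst (SA_outcome \<delta> I a (L1 - {j}) L2) \<le> fst (SA_outcome \<delta> I a L1 L2)"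
      using NE_dev1[OF NE, of "L1 - {j}"] sub by auto
    have e1: "(L1 - {j}) \<inter> L2 = L1 \<inter> L2" "(L1 - {j}) \<union> L2 = (L1 \<union> L2) - {j}"
      using j by auto
    have U: "L1 \<union> L2 \<noteq> {}" using j by auto
    have "av ?f ((L1 \<union> L2) - {j}) \<le> av ?f (L1 \<union> L2)"
    proof (cases "L1 \<inter> L2 = {}")
      case True
      have "fst (SA_outcome \<delta> I a (L1 - {j}) L2) = av ?f ((L1 \<union> L2) - {j})"
        using fo_e[of "L1 - {j}" L2] True e1 ne by auto
      moreover have "fst (SA_outcome \<delta> I a L1 L2) = av ?f (L1 \<union> L2)"
        using fo_e[of L1 L2] True U by auto
      ultimately show ?thesis using dev by simp
    next
      case False
      have "fst (SA_outcome \<delta> I a (L1 - {j}) L2) = (1 - \<delta>) * av ?f (L1 \<inter> L2) + \<delta> * av ?f ((L1 \<union> L2) - {j})"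
        using fo_n[of "L1 - {j}" L2] False e1 by auto
      moreover have "fst (SA_outcome \<delta> I a L1 L2) = (1 - \<delta>) * av ?f (L1 \<inter> L2) + \<delta> * av ?f (L1 \<union> L2)"
        using fo_n[of L1 L2] False by auto
      ultimately show ?thesis using dev d by simp
    qed
    thus ?thesis using av_rem_le[OF finU _ ne] j by blast
  qed
qed

lemma P3:
  assumes fin: "finite I" and NE: "SA_pure_NE \<delta> I a L1 L2" and d: "\<delta> < 1"
    and j: "j \<in> L1 \<inter> L2"
  shows "av (\<lambda>p. fst (a p)) (L1 \<inter> L2) \<le> fst (a j)"
proof -
  let ?f = "\<lambda>p. fst (a p)"
  have sub: "L1 \<subseteq> I" "L2 \<subseteq> I" using NE unfolding SA_pure_NE_def by auto
  have finC: "finite (L1 \<inter> L2)" using sub fin finite_subset by blast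
  show ?thesis
  proof (cases "(L1 \<inter> L2) - {j} = {}")
    case True
    hence "L1 \<inter> L2 = {j}" using j by auto
    thus ?thesis by simp
  next
    case ne: False
    have dev: "fst (SA_outcome \<delta> I a (L1 - {j}) L2) \<le> fst (SA_outcome \<delta> I a L1 L2)"
      using NE_dev1[OF NE, of "L1 - {j}"] sub by auto
    have e1: "(L1 - {j}) \<inter> L2 = (L1 \<inter> L2) - {j}" "(L1 - {j}) \<union> L2 = L1 \<union> L2"
      using j by auto
    have ne3: "L1 \<inter> L2 \<noteq> {}" using j by auto
    have "fst (SA_outcome \<delta> I a (L1 - {j}) L2) = (1 - \<delta>) * av ?f ((L1 \<inter> L2) - {j}) + \<delta> * av ?f (L1 \<union> L2)"
      using fo_n[of "L1 - {j}" L2] ne e1 by auto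
    moreover have "fst (SA_outcome \<delta> I a L1 L2) = (1 - \<delta>) * av ?f (L1 \<inter> L2) + \<delta> * av ?f (L1 \<union> L2)"
      using fo_n[of L1 L2] ne3 by auto
    ultimately have "(1 - \<delta>) * av ?f ((L1 \<inter> L2) - {j}) \<le> (1 - \<delta>) * av ?f (L1 \<inter> L2)"
      using dev by simp
    hence "av ?f ((L1 \<inter> L2) - {j}) \<le> av ?f (L1 \<inter> L2)" using d by simp
    thus ?thesis using av_rem_le[OF finC j ne] by blast
  qed
qed

lemma P4:
  assumes NE: "SA_pure_NE \<delta> I a L1 L2" and d: "\<delta> < 1"
    and C: "L1 \<inter> L2 \<noteq> {}"
  shows "av (\<lambda>p. fst (a p)) (L1 \<union> L2) \<le> av (\<lambda>p. fst (a p)) (L1 \<inter> L2)"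
proof -
  let ?f = "\<lambda>p. fst (a p)"
  have sub: "L1 \<subseteq> I" "L2 \<subseteq> I" using NE unfolding SA_pure_NE_def by auto
  have dev: "fst (SA_outcome \<delta> I a (L1 - L2) L2) \<le> fst (SA_outcome \<delta> I a L1 L2)"
    using NE_dev1[OF NE, of "L1 - L2"] sub by auto
  have e1: "(L1 - L2) \<inter> L2 = {}" "(L1 - L2) \<union> L2 = L1 \<union> L2" by auto
  have ne: "L1 \<union> L2 \<noteq> {}" using C by auto
  have "fst (SA_outcome \<delta> I a (L1 - L2) L2) = av ?f (L1 \<union> L2)"
    using fo_e[of "L1 - L2" L2] e1 ne by auto
  moreover have "fst (SA_outcome \<delta> I a L1 L2) = (1 - \<delta>) * av ?f (L1 \<inter> L2) + \<delta> * av ?f (L1 \<union> L2)"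
    using fo_n[of L1 L2] C by auto
  ultimately have "av ?f (L1 \<union> L2) \<le> (1 - \<delta>) * av ?f (L1 \<inter> L2) + \<delta> * av ?f (L1 \<union> L2)"
    using dev by simp
  hence "(1 - \<delta>) * av ?f (L1 \<union> L2) \<le> (1 - \<delta>) * av ?f (L1 \<inter> L2)"
    by (simp add: algebra_simps)
  thus ?thesis using d by simp
qed

lemma P5:
  assumes fin: "finite I" and NE: "SA_pure_NE \<delta> I a L1 L2" and d: "\<delta> < 1"
    and C: "L1 \<inter> L2 \<noteq> {}" and j: "j \<in> L2" "j \<notin> L1"
  shows "fst (a j) \<le> av (\<lambda>p. fst (a p)) (L1 \<inter> L2)"
proof -
  let ?f = "\<lambda>p. fst (a p)"
  have sub: "L1 \<subseteq> I" "L2 \<subseteq> I" using NE unfolding SA_pure_NE_def by auto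
  have finC: "finite (L1 \<inter> L2)" using sub fin finite_subset by blast
  have dev: "fst (SA_outcome \<delta> I a (insert j L1) L2) \<le> fst (SA_outcome \<delta> I a L1 L2)"
    using NE_dev1[OF NE, of "insert j L1"] sub j by auto
  have e1: "insert j L1 \<inter> L2 = insert j (L1 \<inter> L2)" "insert j L1 \<union> L2 = L1 \<union> L2"
    using j by auto
  have "fst (SA_outcome \<delta> I a (insert j L1) L2) = (1 - \<delta>) * av ?f (insert j (L1 \<inter> L2)) + \<delta> * av ?f (L1 \<union> L2)"
    using fo_n[of "insert j L1" L2] e1 by auto
  moreover have "fst (SA_outcome \<delta> I a L1 L2) = (1 - \<delta>) * av ?f (L1 \<inter> L2) + \<delta> * av ?f (L1 \<union> L2)"
    using fo_n[of L1 L2] C by auto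
  ultimately have "(1 - \<delta>) * av ?f (insert j (L1 \<inter> L2)) \<le> (1 - \<delta>) * av ?f (L1 \<inter> L2)"
    using dev by simp
  hence "av ?f (insert j (L1 \<inter> L2)) \<le> av ?f (L1 \<inter> L2)" using d by simp
  thus ?thesis using av_ins_le[OF finC C] j by blast
qed

lemma P6:
  assumes NE: "SA_pure_NE \<delta> I a L1 L2" and d: "\<delta> < 1"
    and C: "L1 \<inter> L2 = {}" and j: "j \<in> L2"
  shows "fst (a j) \<le> av (\<lambda>p. fst (a p)) (L1 \<union> L2)"
proof -
  let ?f = "\<lambda>p. fst (a p)"
  have sub: "L1 \<subseteq> I" "L2 \<subseteq> I" using NE unfolding SA_pure_NE_def by auto
  have dev: "fst (SA_outcome \<delta> I a (insert j L1) L2) \<le> fst (SA_outcome \<delta> I a L1 L2)"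
    using NE_dev1[OF NE, of "insert j L1"] sub j by auto
  have e1: "insert j L1 \<inter> L2 = {j}" "insert j L1 \<union> L2 = L1 \<union> L2"
    using j C by auto
  have "fst (SA_outcome \<delta> I a (insert j L1) L2) = (1 - \<delta>) * fst (a j) + \<delta> * av ?f (L1 \<union> L2)"
    using fo_n[of "insert j L1" L2] e1 by auto
  moreover have "fst (SA_outcome \<delta> I a L1 L2) = av ?f (L1 \<union> L2)"
    using fo_e[of L1 L2] C j by auto
  ultimately have "(1 - \<delta>) * fst (a j) + \<delta> * av ?f (L1 \<union> L2) \<le> av ?f (L1 \<union> L2)"
    using dev by simp
  hence "(1 - \<delta>) * fst (a j) \<le> (1 - \<delta>) * av ?f (L1 \<union> L2)"
    by (simp add: algebra_simps)
  thus ?thesis using d by simp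
qed



lemma x_le: fixes x :: real assumes "0 \<le> x" "x \<le> 1/2" "x ^ 3 - x + 1/3 = 0" shows "x \<le> 2/5"
proof (rule ccontr)
  assume "\<not> x \<le> 2/5"
  hence x: "x > 2/5" by simp
  have "x ^ 3 - x + 1/3 = (x - 2/5) * (x^2 + 2/5*x + 4/25 - 1) + (8/125 - 2/5 + 1/3)"
    by (simp add: power2_eq_square power3_eq_cube field_simps)
  moreover have "x^2 + 2/5*x + 4/25 - 1 < 0"
  proof -
    have "x*x \<le> (1/2)*(1/2)" using assms by (intro mult_mono) auto
    hence "x^2 \<le> 1/4" by (simp add: power2_eq_square)
    thus ?thesis using assms by simp
  qed
  moreover have "(x - 2/5) * (x^2 + 2/5*x + 4/25 - 1) < 0"
    using x calculation(2) by (simp add: mult_pos_neg)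
  ultimately show False using assms(3) by simp
qed

lemma alg_core:
  fixes h1 h2 l x :: real
  assumes l: "0 < l" "l \<le> 1" and h: "0 \<le> h1" "0 \<le> h2"
    and A: "l * h1^2 * h2 \<le> h1 - 1/3" and B: "1/3 \<le> h2 - l * h1 * h2^2"
    and h1: "h1 \<le> 2/3"
  shows "l * h1^3 \<le> h1 - 1/3"
proof -
  define s where "s = l * h1^2 * h2"
  define r where "r = h1 - 1/3"
  have s0: "0 \<le> s" using l h by (simp add: s_def)
  have sr: "s \<le> r" using A by (simp add: s_def r_def)
  have "l * h1^3 * (1/3) \<le> l * h1^3 * (h2 - l * h1 * h2^2)"
    using B l h by (intro mult_left_mono) auto
  also have "\<dots> = s * h1 - s^2" by (simp add: s_def power2_eq_square power3_eq_cube algebra_simps)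
  finally have 1: "l * h1^3 / 3 \<le> s * h1 - s^2" by simp
  have "(r - s) * (h1 - r - s) \<ge> 0"
    using sr s0 h1 by (intro mult_nonneg_nonneg) (auto simp: r_def)
  hence "s * h1 - s^2 \<le> r * h1 - r^2" by (simp add: algebra_simps power2_eq_square)
  also have "r * h1 - r^2 = (h1 - 1/3) / 3" by (simp add: r_def power2_eq_square algebra_simps)
  finally show ?thesis using 1 by simp
qed


lemma alg_final:
  fixes k :: nat and H1 H2 x :: real
  assumes k: "k > 0" and x0: "0 \<le> x" and x1: "x \<le> 1/2" and xc: "x ^ 3 - x + 1/3 = 0"
    and H: "0 \<le> H1" "0 \<le> H2"
    and A0: "real ((k+1)*(k+2)) / 2 * (real k / 3 - H1) + H1^2 * H2 / 2 \<le> 0"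
    and B0: "real ((k+1)*(k+2)) / 2 * (real k / 3 - H2) + H2^2 * H1 / 2 \<le> 0"
  shows "real k * x - 1/2 \<le> H1"
proof -
  define N where "N = real ((k+1)*(k+2)) / 2"
  define K where "K = real k"
  have K: "K > 0" using k by (simp add: K_def)
  have "(0::nat) < (k+1)*(k+2)" by simp
  hence N: "N > 0" unfolding N_def by (metis divide_pos_pos of_nat_0_less_iff zero_less_numeral)
  have NK: "N = (K+1)*(K+2)/2" by (simp add: N_def K_def algebra_simps)
  define h1 where "h1 = H1 / K"
  define h2 where "h2 = H2 / K"
  define l where "l = K^2 / (2*N)"
  have H1e: "H1 = K * h1" and H2e: "H2 = K * h2" using K by (auto simp: h1_def h2_def)
  have h0: "0 \<le> h1" "0 \<le> h2" using H K by (auto simp: h1_def h2_def)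
  have l0: "0 < l" using K N by (simp add: l_def)
  have "K^2 \<le> 2*N" using K by (simp add: NK power2_eq_square algebra_simps)
  hence l1: "l \<le> 1" using N by (simp add: l_def divide_le_eq_1)
  have eA: "N*K*((1/3 - h1) + l*h1^2*h2) = N*(K/3 - H1) + H1^2*H2/2"
    using N K by (simp add: l_def H1e H2e power2_eq_square field_simps)
  have eB: "N*K*((1/3 - h2) + l*h1*h2^2) = N*(K/3 - H2) + H2^2*H1/2"
    using N K by (simp add: l_def H1e H2e power2_eq_square field_simps)
  have NKp: "N*K > 0" using N K by simp
  have A: "l * h1^2 * h2 \<le> h1 - 1/3"
  proof -
    have A0': "N * (K/3 - H1) + H1^2*H2/2 \<le> 0" unfolding N_def K_def by (rule A0)
    have "N*K*((1/3 - h1) + l*h1^2*h2) \<le> 0" using eA A0' by linarith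
    hence "(1/3 - h1) + l*h1^2*h2 \<le> 0" using NKp N K by (simp add: mult_le_0_iff)
    thus ?thesis by simp
  qed
  have B: "1/3 \<le> h2 - l * h1 * h2^2"
  proof -
    have B0': "N * (K/3 - H2) + H2^2*H1/2 \<le> 0" unfolding N_def K_def by (rule B0)
    have "N*K*((1/3 - h2) + l*h1*h2^2) \<le> 0" using eB B0' by linarith
    hence "(1/3 - h2) + l*h1*h2^2 \<le> 0" using NKp N K by (simp add: mult_le_0_iff)
    thus ?thesis by simp
  qed
  have x25: "x \<le> 2/5" using x_le[OF x0 x1 xc] .
  show ?thesis
  proof (cases "h1 \<le> 2/3")
    case False
    hence "K * x \<le> K * h1" using K x25 by (intro mult_left_mono) auto
    thus ?thesis by (simp add: H1e K_def)
  next
    case True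
    have c: "l * h1^3 \<le> h1 - 1/3" using alg_core[OF l0 l1 h0 A B True] .
    show ?thesis
    proof (cases "x \<le> h1")
      case True
      hence "K * x \<le> K * h1" using K by (intro mult_left_mono) auto
      thus ?thesis by (simp add: H1e K_def)
    next
      case False
      hence xh: "h1 < x" by simp
      have "x - h1 \<le> x^3 - l * h1^3" using c xc by simp
      also have "x^3 - l*h1^3 = (1-l)*x^3 + l*(x^3 - h1^3)" by (simp add: algebra_simps)
      also have "\<dots> \<le> (1-l)*x^3 + (x^3 - h1^3)"
      proof -
        have "h1^3 \<le> x^3" using xh h0 by (intro power_mono) auto
        hence "l*(x^3 - h1^3) \<le> 1*(x^3 - h1^3)" using l1 by (intro mult_right_mono) auto
        thus ?thesis by simp
      qed
      also have "x^3 - h1^3 = (x - h1)*(x^2 + x*h1 + h1^2)"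
        by (simp add: algebra_simps power2_eq_square power3_eq_cube)
      also have "\<dots> \<le> (x - h1)*(3*x^2)"
      proof -
        have "h1^2 \<le> x^2" using xh h0 by (intro power_mono) auto
        moreover have "x*h1 \<le> x*x" using xh x0 by (intro mult_left_mono) auto
        ultimately have "x^2 + x*h1 + h1^2 \<le> 3*x^2" by (simp add: power2_eq_square)
        thus ?thesis using xh by (intro mult_left_mono) auto
      qed
      finally have m: "(x - h1) * (1 - 3*x^2) \<le> (1-l)*x^3" by (simp add: algebra_simps)
      have Kl: "K*(1-l) \<le> 3"
      proof -
        have "1 - l = (3*K+2)/((K+1)*(K+2))" using K N
          by (simp add: l_def NK power2_eq_square field_simps)
        moreover have "K*(3*K+2) \<le> 3*((K+1)*(K+2))" using K by (simp add: algebra_simps)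
        moreover have "(K+1)*(K+2) > 0" using K by simp
        ultimately have "K*(3*K+2)/((K+1)*(K+2)) \<le> 3" by (simp add: pos_divide_le_eq)
        thus ?thesis using \<open>1 - l = _\<close> by simp
      qed
      have x3: "6*x^3 + 3*x^2 \<le> 1"
      proof -
        have "x^3 \<le> (2/5)^3" using x0 x25 by (intro power_mono) auto
        moreover have "x^2 \<le> (2/5)^2" using x0 x25 by (intro power_mono) auto
        ultimately show ?thesis by (simp add: power_divide) 
      qed
      have "K*((x - h1) * (1 - 3*x^2)) \<le> K*((1-l)*x^3)" using m K by (intro mult_left_mono) auto
      also have "\<dots> = (K*(1-l))*x^3" by simp
      also have "\<dots> \<le> 3*x^3" using Kl x0 by (intro mult_right_mono) auto
      also have "\<dots> \<le> (1 - 3*x^2)/2" using x3 by simp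
      finally have "(K*(x - h1)) * (1 - 3*x^2) \<le> (1/2) * (1 - 3*x^2)" by (simp add: algebra_simps)
      moreover have "1 - 3*x^2 > 0"
      proof -
        have "x^2 \<le> (2/5)^2" using x0 x25 by (intro power_mono) auto
        thus ?thesis by (simp add: power_divide)
      qed
      ultimately have "K*(x - h1) \<le> 1/2" by (rule mult_right_le_imp_le)
      thus ?thesis by (simp add: H1e K_def algebra_simps)
    qed
  qed
qed



lemma Ak_Sigma: "Ak_index k = Sigma {..k} (\<lambda>c. {..k-c})"
  by (auto simp: Ak_index_def)

lemma Ak_finite: "finite (Ak_index k)" by (simp add: Ak_Sigma)

lemma sum_c: "(\<Sum>c\<le>k. real c) = real k * (real k + 1) / 2"
  by (induction k) (simp_all add: field_simps)

lemma sum_lin: "(\<Sum>c\<le>k. real k + 1 - real c) = (real k + 1) * (real k + 2) / 2"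
proof (induction k)
  case 0 then show ?case by simp
next
  case (Suc k)
  have "(\<Sum>c\<le>Suc k. real (Suc k) + 1 - real c) = (\<Sum>c\<le>k. real (Suc k) + 1 - real c) + 1"
    by simp
  also have "(\<Sum>c\<le>k. real (Suc k) + 1 - real c) = (\<Sum>c\<le>k. (real k + 1 - real c) + 1)"
    by (intro sum.cong) auto
  also have "(\<Sum>c\<le>k. (real k + 1 - real c) + 1) = (\<Sum>c\<le>k. real k + 1 - real c) + (real k + 1)"
    by (subst sum.distrib) simp
  also have "\<dots> = (real k + 1) * (real k + 2) / 2 + (real k + 1)" using Suc.IH by simp
  finally show ?case by (simp add: field_simps)
qed

lemma sum_quad: "(\<Sum>c\<le>k. real c * (real k + 1 - real c)) = real k * (real k + 1) * (real k + 2) / 6"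
proof (induction k)
  case 0 then show ?case by simp
next
  case (Suc k)
  have "(\<Sum>c\<le>Suc k. real c * (real (Suc k) + 1 - real c))
      = (\<Sum>c\<le>k. real c * (real (Suc k) + 1 - real c)) + (real k + 1)"
    by simp
  also have "(\<Sum>c\<le>k. real c * (real (Suc k) + 1 - real c)) = (\<Sum>c\<le>k. real c * (real k + 1 - real c) + real c)"
    by (intro sum.cong) (auto simp: algebra_simps)
  also have "(\<Sum>c\<le>k. real c * (real k + 1 - real c) + real c) = (\<Sum>c\<le>k. real c * (real k + 1 - real c)) + (\<Sum>c\<le>k. real c)"
    by (rule sum.distrib)
  also have "\<dots> = real k * (real k + 1) * (real k + 2) / 6 + real k * (real k + 1) / 2"
    using Suc.IH sum_c[of k] by simp
  finally show ?case by (simp add: field_simps)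
qed

lemma sum_Ak: "(\<Sum>p\<in>Ak_index k. g (fst p)) = (\<Sum>c\<le>k. real (k - c + 1) * g c)"
proof -
  have "(\<Sum>p\<in>Ak_index k. g (fst p)) = (\<Sum>c\<le>k. \<Sum>d\<le>k-c. g c)"
    unfolding Ak_Sigma by (subst sum.Sigma) (auto simp: split_def)
  also have "\<dots> = (\<Sum>c\<le>k. real (k - c + 1) * g c)" by simp
  finally show ?thesis .
qed

lemma card_Ak: "real (card (Ak_index k)) = (real k + 1) * (real k + 2) / 2"
proof -
  have "real (card (Ak_index k)) = (\<Sum>p\<in>Ak_index k. (\<lambda>c. 1::real) (fst p))" by simp
  also have "\<dots> = (\<Sum>c\<le>k. real (k - c + 1) * 1)" by (rule sum_Ak)
  also have "\<dots> = (\<Sum>c\<le>k. real k + 1 - real c)"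
    by (intro sum.cong) (auto simp: of_nat_diff)
  also have "\<dots> = (real k + 1) * (real k + 2) / 2" by (rule sum_lin)
  finally show ?thesis .
qed

lemma sum_fst_Ak: "(\<Sum>p\<in>Ak_index k. real (fst p)) = real k * (real k + 1) * (real k + 2) / 6"
proof -
  have "(\<Sum>p\<in>Ak_index k. real (fst p)) = (\<Sum>c\<le>k. real (k - c + 1) * real c)"
    by (rule sum_Ak)
  also have "\<dots> = (\<Sum>c\<le>k. real c * (real k + 1 - real c))"
    by (intro sum.cong) (auto simp: of_nat_diff algebra_simps)
  also have "\<dots> = real k * (real k + 1) * (real k + 2) / 6" by (rule sum_quad)
  finally show ?thesis .
qed

lemma sum_lt: "(\<Sum>c<a. real c) = real a * (real a - 1) / 2"
  by (induction a) (simp_all add: field_simps)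

lemma ineqA:
  fixes k :: nat and U :: "(nat \<times> nat) set" and H1 H2 :: real
  assumes k: "k > 0" and UI: "U \<subseteq> Ak_index k" and Une: "U \<noteq> {}"
    and H1: "H1 = (\<Sum>p\<in>U. real (fst p)) / real (card U)"
    and H2: "H2 = (\<Sum>p\<in>U. real (snd p)) / real (card U)"
    and K1: "\<And>p. p \<in> Ak_index k \<Longrightarrow> p \<notin> U \<Longrightarrow> real (fst p) \<le> H1"
    and K2: "\<And>p. p \<in> U \<Longrightarrow> H1 \<le> real (fst p) \<or> H2 \<le> real (snd p)"
  shows "real ((k+1)*(k+2)) / 2 * (real k / 3 - H1) + H1^2 * H2 / 2 \<le> 0"
proof -
  define I where "I = Ak_index k"
  have finI: "finite I" by (simp add: I_def Ak_finite)
  have finU: "finite U" using UI Ak_finite finite_subset by blast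
  define n where "n = real (card U)"
  have n: "n > 0" using finU Une by (simp add: n_def card_gt_0_iff)
  have H10: "0 \<le> H1" using n by (simp add: H1 n_def sum_nonneg)
  have H20: "0 \<le> H2" using n by (simp add: H2 n_def sum_nonneg)
  have Hk: "H1 + H2 \<le> real k"
  proof -
    have "(\<Sum>p\<in>U. real (fst p)) + (\<Sum>p\<in>U. real (snd p)) = (\<Sum>p\<in>U. real (fst p) + real (snd p))"
      by (simp add: sum.distrib)
    also have "\<dots> \<le> (\<Sum>p\<in>U. real k)"
      using UI by (intro sum_mono) (auto simp: Ak_index_def)
    also have "\<dots> = n * real k" by (simp add: n_def)
    finally have "(\<Sum>p\<in>U. real (fst p)) + (\<Sum>p\<in>U. real (snd p)) \<le> n * real k" .
    hence "((\<Sum>p\<in>U. real (fst p)) + (\<Sum>p\<in>U. real (snd p))) / n \<le> real k"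
      using n by (simp add: pos_divide_le_eq mult.commute)
    thus ?thesis by (simp add: H1 H2 n_def add_divide_distrib)
  qed
  define a where "a = nat \<lceil>H1\<rceil>"
  define b where "b = nat \<lceil>H2\<rceil>"
  have lta: "\<And>c. c < a \<longleftrightarrow> real c < H1"
    unfolding a_def using H10 by (metis less_ceiling_iff of_int_of_nat_eq zless_nat_eq_int_zless)
  have ltb: "\<And>c. c < b \<longleftrightarrow> real c < H2"
    unfolding b_def using H20 by (metis less_ceiling_iff of_int_of_nat_eq zless_nat_eq_int_zless)
  have aH: "H1 \<le> real a" "real a < H1 + 1"
    unfolding a_def using H10 by (auto simp: ceiling_correct) (linarith)
  have bH: "H2 \<le> real b"
    unfolding b_def using H20 by (simp add: ceiling_correct)
  define P where "P = {..<a} \<times> {..<b}"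
  have finP: "finite P" by (simp add: P_def)
  have PI: "P \<subseteq> I"
  proof
    fix p assume "p \<in> P"
    then obtain c d where p: "p = (c,d)" "c < a" "d < b" by (auto simp: P_def)
    hence "real c + real d < real k" using lta ltb Hk by (smt (verit))
    hence "c + d \<le> k" by linarith
    thus "p \<in> I" using p by (simp add: I_def Ak_index_def)
  qed
  have UP: "U \<subseteq> I - P"
  proof
    fix p assume pU: "p \<in> U"
    hence "p \<in> I" using UI by (auto simp: I_def)
    moreover have "p \<notin> P" using K2[OF pU] lta ltb by (auto simp: P_def)
    ultimately show "p \<in> I - P" by simp
  qed
  have sU: "(\<Sum>p\<in>U. real (fst p) - H1) = 0"
    using n by (simp add: sum_subtractf H1 n_def)
  have sR: "(\<Sum>p\<in>(I - P) - U. real (fst p) - H1) \<le> 0"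
    by (intro sum_nonpos) (auto simp: K1 I_def)
  have "(\<Sum>p\<in>I - P. real (fst p) - H1) = (\<Sum>p\<in>U. real (fst p) - H1) + (\<Sum>p\<in>(I - P) - U. real (fst p) - H1)"
  proof -
    have "I - P = U \<union> ((I - P) - U)" using UP by blast
    thus ?thesis using finI finU
      by (subst sum.union_disjoint[symmetric]) (auto intro: sum.cong)
  qed
  hence s1: "(\<Sum>p\<in>I - P. real (fst p) - H1) \<le> 0" using sU sR by simp
  have s2: "(\<Sum>p\<in>I - P. real (fst p) - H1) = (\<Sum>p\<in>I. real (fst p) - H1) - (\<Sum>p\<in>P. real (fst p) - H1)"
    using finI PI by (simp add: sum_diff)
  have s3: "(\<Sum>p\<in>I. real (fst p) - H1) = real k * (real k + 1) * (real k + 2) / 6 - (real k + 1) * (real k + 2) / 2 * H1"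
    by (simp add: sum_subtractf I_def sum_fst_Ak card_Ak)
  have s4: "(\<Sum>p\<in>P. H1 - real (fst p)) = real b * (real a * H1 - real a * (real a - 1) / 2)"
  proof -
    have "(\<Sum>p\<in>P. H1 - real (fst p)) = (\<Sum>c<a. \<Sum>d<b. H1 - real c)"
      unfolding P_def by (subst sum.cartesian_product) (simp add: split_def)
    also have "\<dots> = (\<Sum>c<a. real b * (H1 - real c))" by simp
    also have "\<dots> = real b * (real a * H1 - (\<Sum>c<a. real c))"
      by (simp add: sum_distrib_left[symmetric] sum_subtractf)
    finally show ?thesis by (simp add: sum_lt)
  qed
  have s5: "H1^2 * H2 / 2 \<le> (\<Sum>p\<in>P. H1 - real (fst p))"
  proof -
    have q: "H1^2 / 2 \<le> real a * H1 - real a * (real a - 1) / 2"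
    proof -
      have "(real a - H1)^2 \<le> real a - H1"
        using aH by (simp add: power2_eq_square) (smt (verit) mult_left_le_one_le)
      hence "H1*H1 + real a * real a - real a \<le> 2 * real a * H1" using H10
        by (simp add: power2_eq_square algebra_simps)
      thus ?thesis by (simp add: power2_eq_square field_simps)
    qed
    have "H2 * (H1^2 / 2) \<le> real b * (real a * H1 - real a * (real a - 1) / 2)"
      using bH q H20 H10 by (intro mult_mono) auto
    thus ?thesis using s4 by (simp add: algebra_simps)
  qed
  have s6: "(\<Sum>p\<in>P. real (fst p) - H1) = - (\<Sum>p\<in>P. H1 - real (fst p))"
    by (simp add: sum_negf[symmetric])
  have "real k * (real k + 1) * (real k + 2) / 6 - (real k + 1) * (real k + 2) / 2 * H1 + H1^2 * H2 / 2 \<le> 0"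
    using s1 s2 s3 s5 s6 by linarith
  thus ?thesis by (simp add: field_simps)
qed



lemma dist_sq_le:
  fixes a b c d r :: real
  assumes "(a-c)^2 + (b-d)^2 \<le> r^2" "0 \<le> r"
  shows "dist (a,b) (c,d) \<le> r"
proof -
  have "dist (a,b) (c,d) = sqrt ((a-c)^2 + (b-d)^2)"
    by (simp add: dist_Pair_Pair dist_real_def)
  also have "\<dots> \<le> sqrt (r^2)" using assms(1) by (rule real_sqrt_le_mono)
  also have "\<dots> = r" using assms(2) by simp
  finally show ?thesis .
qed

lemma seg_mem:
  fixes x t :: real
  assumes "x < 1/2" "x \<le> t" "t \<le> 1 - x"
  shows "(t, 1 - t) \<in> convex hull {(x, 1 - x), (1 - x, x)}"
proof -
  define u where "u = (t - x) / (1 - 2*x)"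
  have u: "0 \<le> u" "u \<le> 1" using assms by (auto simp: u_def divide_simps)
  have uu: "u * (1 - 2*x) = t - x" using assms by (simp add: u_def)
  have "(1 - u) * x + u * (1 - x) = t" using uu by (simp add: algebra_simps)
  moreover have "(1 - u) * (1 - x) + u * x = 1 - t" using uu by (simp add: algebra_simps)
  ultimately have "(t, 1 - t) = (1 - u) *\<^sub>R (x, 1 - x) + u *\<^sub>R (1 - x, x)"
    by simp
  thus ?thesis using u unfolding segment_convex_hull[symmetric] in_segment by blast
qed

lemma dist_lem:
  fixes x a1 a2 :: real and k :: nat
  assumes k: "k > 0" and x: "0 \<le> x" "x \<le> 2/5"
    and s1: "a1 + a2 \<le> 1" and s2: "1 - 1 / real k \<le> a1 + a2"
    and l1: "x - 1 / (2 * real k) \<le> a1" and l2: "x - 1 / (2 * real k) \<le> a2"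
  shows "\<exists>p\<in>convex hull {(x, 1 - x), (1 - x, x)}. dist (a1, a2) p \<le> 1 / real k"
proof -
  define e where "e = 1 - a1 - a2"
  define r where "r = 1 / real k"
  have r0: "0 < r" using k by (simp add: r_def)
  have e0: "0 \<le> e" "e \<le> r" using s1 s2 by (auto simp: e_def r_def)
  have l1': "x - r/2 \<le> a1" and l2': "x - r/2 \<le> a2" using l1 l2 by (auto simp: r_def)
  define t where "t = a1 + e/2"
  have te: "2*t = 2*a1 + e" "e = 1 - a1 - a2" by (simp_all add: t_def e_def field_simps)
  have x12: "x < 1/2" using x by simp
  show ?thesis
  proof (cases "t < x")
    case True
    have m: "(x, 1 - x) \<in> convex hull {(x, 1 - x), (1 - x, x)}"
      by (simp add: hull_inc)
    have b1: "\<bar>a1 - x\<bar> \<le> r/2"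
      proof -
        have "a1 - x \<le> r/2" using True l1' e0 te by linarith
        moreover have "-(a1 - x) \<le> r/2" using True l1' e0 te by linarith
        ultimately show ?thesis by (metis abs_le_iff)
      qed
    have b2: "\<bar>a2 - (1 - x)\<bar> \<le> r/2"
      proof -
        have "a2 - (1 - x) \<le> r/2" using True l1' e0 te by linarith
        moreover have "-(a2 - (1 - x)) \<le> r/2" using True l1' e0 te by linarith
        ultimately show ?thesis by (metis abs_le_iff)
      qed
    have "(a1 - x)^2 + (a2 - (1 - x))^2 \<le> (r/2)^2 + (r/2)^2"
      using b1 b2 by (intro add_mono; metis abs_ge_zero power2_abs power_mono)
    also have "\<dots> \<le> r^2" by (simp add: power2_eq_square)
    finally have "dist (a1,a2) (x, 1-x) \<le> r" using r0 by (intro dist_sq_le) auto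
      thus ?thesis using m r_def by blast
  next
    case False
    show ?thesis
    proof (cases "1 - x < t")
      case True
      have m: "(1 - x, x) \<in> convex hull {(x, 1 - x), (1 - x, x)}"
        by (simp add: hull_inc)
      have b1: "\<bar>a1 - (1 - x)\<bar> \<le> r/2"
      proof -
        have "a1 - (1 - x) \<le> r/2" using True l2' e0 te by linarith
        moreover have "-(a1 - (1 - x)) \<le> r/2" using True l2' e0 te by linarith
        ultimately show ?thesis by (metis abs_le_iff)
      qed
      have b2: "\<bar>a2 - x\<bar> \<le> r/2"
      proof -
        have "a2 - x \<le> r/2" using True l2' e0 te by linarith
        moreover have "-(a2 - x) \<le> r/2" using True l2' e0 te by linarith
        ultimately show ?thesis by (metis abs_le_iff)
      qed
      have "(a1 - (1 - x))^2 + (a2 - x)^2 \<le> (r/2)^2 + (r/2)^2"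
        using b1 b2 by (intro add_mono; metis abs_ge_zero power2_abs power_mono)
      also have "\<dots> \<le> r^2" by (simp add: power2_eq_square)
      finally have "dist (a1,a2) (1-x, x) \<le> r" using r0 by (intro dist_sq_le) auto
      thus ?thesis using m r_def by blast
    next
      case F2: False
      have m: "(t, 1 - t) \<in> convex hull {(x, 1 - x), (1 - x, x)}"
        using seg_mem[OF x12] False F2 by simp
      have "(a1 - t)^2 + (a2 - (1 - t))^2 = (e/2)^2 + (e/2)^2"
        by (simp add: t_def e_def power2_eq_square algebra_simps)
      also have "\<dots> \<le> r^2"
      proof -
        have "e*e \<le> r*r" using e0 by (intro mult_mono) auto
        moreover have "0 \<le> e*e" by simp
        moreover have "(e/2)^2 + (e/2)^2 = e*e/2" by (simp add: power2_eq_square)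
        moreover have "r^2 = r*r" by (simp add: power2_eq_square)
        ultimately show ?thesis by linarith
      qed
      finally have "dist (a1,a2) (t, 1-t) \<le> r" using r0 by (intro dist_sq_le) auto
      thus ?thesis using m r_def by blast
    qed
  qed
qed


lemma ineqB:
  fixes k :: nat and U :: "(nat \<times> nat) set" and H1 H2 :: real
  assumes k: "k > 0" and UI: "U \<subseteq> Ak_index k" and Une: "U \<noteq> {}"
    and H1: "H1 = (\<Sum>p\<in>U. real (fst p)) / real (card U)"
    and H2: "H2 = (\<Sum>p\<in>U. real (snd p)) / real (card U)"
    and K1: "\<And>p. p \<in> Ak_index k \<Longrightarrow> p \<notin> U \<Longrightarrow> real (snd p) \<le> H2"
    and K2: "\<And>p. p \<in> U \<Longrightarrow> H1 \<le> real (fst p) \<or> H2 \<le> real (snd p)"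
  shows "real ((k+1)*(k+2)) / 2 * (real k / 3 - H2) + H2^2 * H1 / 2 \<le> 0"
proof -
  let ?V = "prod.swap ` U"
  have inj: "inj_on prod.swap U" by (metis inj_on_def swap_swap)
  have cV: "card ?V = card U" using inj by (rule card_image)
  have s1: "(\<Sum>p\<in>?V. real (fst p)) = (\<Sum>p\<in>U. real (snd p))"
    using inj by (simp add: sum.reindex)
  have s2: "(\<Sum>p\<in>?V. real (snd p)) = (\<Sum>p\<in>U. real (fst p))"
    using inj by (simp add: sum.reindex)
  have swI: "\<And>p. p \<in> Ak_index k \<Longrightarrow> prod.swap p \<in> Ak_index k"
    by (auto simp: Ak_index_def)
  show ?thesis
  proof (rule ineqA[OF k])
    show "?V \<subseteq> Ak_index k" using UI swI by auto
    show "?V \<noteq> {}" using Une by simp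
    show "H2 = (\<Sum>p\<in>?V. real (fst p)) / real (card ?V)" using s1 cV H2 by simp
    show "H1 = (\<Sum>p\<in>?V. real (snd p)) / real (card ?V)" using s2 cV H1 by simp
    fix p
    show "p \<in> Ak_index k \<Longrightarrow> p \<notin> ?V \<Longrightarrow> real (fst p) \<le> H2"
    proof -
      assume "p \<in> Ak_index k" "p \<notin> ?V"
      hence "prod.swap p \<in> Ak_index k" "prod.swap p \<notin> U" using swI by (auto simp: image_iff)
      thus ?thesis using K1 by (cases p) auto
    qed
    show "p \<in> ?V \<Longrightarrow> H2 \<le> real (fst p) \<or> H1 \<le> real (snd p)"
    proof -
      assume "p \<in> ?V"
      then obtain q where q: "q \<in> U" "p = prod.swap q" by auto
      show ?thesis using K2[OF q(1)] q(2) by (cases q) auto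
    qed
  qed
qed

lemma sq_half:
  fixes y :: real
  assumes "0 \<le> y" "y \<le> 1"
  shows "(y - 1/2)^2 \<le> 1/4"
proof -
  have "0 \<le> y * (1 - y)" using assms by simp
  moreover have "(y - 1/2)^2 = 1/4 - y * (1 - y)" by (simp add: power2_eq_square algebra_simps)
  ultimately show ?thesis by simp
qed

theorem proposition1:
  fixes k :: nat and \<delta> x :: real and L1 L2 :: "(nat \<times> nat) set"
  assumes "k > 0"
    and "0 < \<delta>" and "\<delta> \<le> 1"
    and "0 \<le> x" and "x \<le> 1/2" and "x ^ 3 - x + 1/3 = 0"
    and "SA_pure_NE \<delta> (Ak_index k) (Ak_util k) L1 L2"
  shows "infdist (SA_outcome \<delta> (Ak_index k) (Ak_util k) L1 L2)
           (convex hull {(x, 1 - x), (1 - x, x)}) \<le> \<delta> + 1 / real k"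
proof -
  note k = assms(1) and d0 = assms(2) and d1 = assms(3) and x0 = assms(4) and x1 = assms(5)
    and xc = assms(6)
  define I where "I = Ak_index k"
  define a where "a = Ak_util k"
  define S where "S = convex hull {(x, 1 - x), (1 - x, x)}"
  define Out where "Out = SA_outcome \<delta> I a L1 L2"
  have NE: "SA_pure_NE \<delta> I a L1 L2" using assms(7) by (simp add: I_def a_def)
  have finI: "finite I" by (simp add: I_def Ak_finite)
  have sub: "L1 \<subseteq> I" "L2 \<subseteq> I" using NE unfolding SA_pure_NE_def by auto
  define u1 where "u1 = (\<lambda>p. fst (a p))"
  define u2 where "u2 = (\<lambda>p. snd (a p))"
  have u1e: "\<And>p. u1 p = real (fst p) / real k" by (simp add: u1_def a_def Ak_util_def)
  have u2e: "\<And>p. u2 p = real (snd p) / real k" by (simp add: u2_def a_def Ak_util_def)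
  have Kp: "real k > 0" using k by simp
  have x25: "x \<le> 2/5" using x_le[OF x0 x1 xc] .
  have bounds: "\<And>T. T \<subseteq> I \<Longrightarrow> 0 \<le> av u1 T \<and> 0 \<le> av u2 T \<and> av u1 T + av u2 T \<le> 1"
  proof -
    fix T assume T: "T \<subseteq> I"
    have "0 \<le> sum u1 T" "0 \<le> sum u2 T" by (auto intro!: sum_nonneg simp: u1e u2e)
    moreover have "sum u1 T + sum u2 T \<le> real (card T)"
    proof -
      have "sum u1 T + sum u2 T = (\<Sum>p\<in>T. u1 p + u2 p)" by (simp add: sum.distrib)
      also have "\<dots> \<le> (\<Sum>p\<in>T. 1)"
      proof (rule sum_mono)
        fix p assume "p \<in> T"
        hence "fst p + snd p \<le> k" using T by (auto simp: I_def Ak_index_def)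
        hence "real (fst p) + real (snd p) \<le> real k" by linarith
        thus "u1 p + u2 p \<le> 1" using Kp by (simp add: u1e u2e add_divide_distrib[symmetric])
      qed
      finally show ?thesis by simp
    qed
    ultimately show "0 \<le> av u1 T \<and> 0 \<le> av u2 T \<and> av u1 T + av u2 T \<le> 1"
      by (cases "card T = 0") (auto simp: av_def add_divide_distrib[symmetric] divide_le_eq)
  qed
  have x12: "x < 1/2" using x25 by simp
  have q: "(1/2, 1/2) \<in> S" using seg_mem[OF x12, of "1/2"] x0 x12 by (simp add: S_def)
  have dq: "\<And>z::real\<times>real. 0 \<le> fst z \<Longrightarrow> fst z \<le> 1 \<Longrightarrow> 0 \<le> snd z \<Longrightarrow> snd z \<le> 1 \<Longrightarrow> dist z (1/2, 1/2) \<le> 1"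
  proof -
    fix z :: "real \<times> real"
    assume z: "0 \<le> fst z" "fst z \<le> 1" "0 \<le> snd z" "snd z \<le> 1"
    have "(fst z - 1/2)^2 \<le> 1/4" using z(1,2) by (rule sq_half)
    moreover have "(snd z - 1/2)^2 \<le> 1/4" using z(3,4) by (rule sq_half)
    ultimately have "dist (fst z, snd z) (1/2, 1/2) \<le> 1" by (intro dist_sq_le) auto
    thus "dist z (1/2, 1/2) \<le> 1" by simp
  qed
  show ?thesis
  proof (cases "\<delta> = 1")
    case True
    have "0 \<le> fst Out \<and> fst Out \<le> 1 \<and> 0 \<le> snd Out \<and> snd Out \<le> 1"
    proof -
      have "\<exists>T. T \<subseteq> I \<and> fst Out = av u1 T \<and> snd Out = av u2 T"
      proof (cases "L1 = {} \<and> L2 = {}")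
        case True
        thus ?thesis unfolding Out_def fst_out snd_out
          by (intro exI[of _ I]) (auto simp: u1_def u2_def)
      next
        case False
        thus ?thesis unfolding Out_def fst_out snd_out using \<open>\<delta> = 1\<close> sub
          by (intro exI[of _ "L1 \<union> L2"]) (auto simp: u1_def u2_def)
      qed
      then obtain T where "T \<subseteq> I" "fst Out = av u1 T" "snd Out = av u2 T" by blast
      thus ?thesis using bounds[of T] by auto
    qed
    hence "dist Out (1/2, 1/2) \<le> 1" using dq by blast
    hence "infdist Out S \<le> 1" using infdist_le[OF q, of Out] by linarith
    moreover have "0 \<le> 1 / real k" by simp
    ultimately have "infdist Out S \<le> \<delta> + 1 / real k" using True by linarith
    thus ?thesis by (simp add: Out_def I_def a_def S_def)
  next
    case False
    hence d1': "\<delta> < 1" using d1 by simp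
    have NE2: "SA_pure_NE \<delta> I (swp a) L2 L1" using NE_swp[OF NE] .
    have fsw: "(\<lambda>p. fst (swp a p)) = u2" by (simp add: swp_def u2_def)
    have fsw1: "\<And>p. fst (swp a p) = u2 p" by (simp add: swp_def u2_def)
    define U where "U = L1 \<union> L2"
    define C where "C = L1 \<inter> L2"
    have UI: "U \<subseteq> I" using sub by (auto simp: U_def)
    have CI: "C \<subseteq> I" using sub by (auto simp: C_def)
    have finU: "finite U" using UI finI finite_subset by blast
    have CU: "C \<subseteq> U" by (auto simp: C_def U_def)
    have Une: "U \<noteq> {}"
    proof
      assume "U = {}"
      hence e: "L1 = {}" "L2 = {}" by (auto simp: U_def)
      have kI: "(k, 0) \<in> I" by (simp add: I_def Ak_index_def)
      have "u1 (k,0) \<le> av u1 I" using P0[OF NE[unfolded e] kI] by (simp add: u1_def)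
      moreover have "u1 (k,0) = 1" using Kp by (simp add: u1e)
      moreover have "av u1 I = 1/3"
      proof -
        have "sum u1 I = (\<Sum>p\<in>I. real (fst p)) / real k" by (simp add: u1e sum_divide_distrib)
        also have "\<dots> = real k * (real k + 1) * (real k + 2) / 6 / real k" by (simp add: I_def sum_fst_Ak)
        also have "\<dots> = (real k + 1) * (real k + 2) / 6" using Kp by simp
        finally have s: "sum u1 I = (real k + 1) * (real k + 2) / 6" .
        have c: "real (card I) = (real k + 1) * (real k + 2) / 2" by (simp add: I_def card_Ak)
        have pos: "(real k + 1) * (real k + 2) > 0" by simp
        show ?thesis unfolding av_def s c using pos by (simp add: field_simps)
      qed
      ultimately show False by simp
    qed
    define h1 where "h1 = av u1 U"
    define h2 where "h2 = av u2 U"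
    define H1 where "H1 = (\<Sum>p\<in>U. real (fst p)) / real (card U)"
    define H2 where "H2 = (\<Sum>p\<in>U. real (snd p)) / real (card U)"
    have hH1: "h1 = H1 / real k" by (simp add: h1_def H1_def av_def u1e sum_divide_distrib[symmetric])
    have hH2: "h2 = H2 / real k" by (simp add: h2_def H2_def av_def u2e sum_divide_distrib[symmetric])
    have U21: "L2 \<union> L1 = U" "L2 \<inter> L1 = C" by (auto simp: U_def C_def)
    have K1: "\<And>p. p \<in> I \<Longrightarrow> p \<notin> U \<Longrightarrow> u1 p \<le> h1 \<and> u2 p \<le> h2"
    proof -
      fix p assume p: "p \<in> I" "p \<notin> U"
      have "u1 p \<le> h1" using P1[OF finI NE d0, of p] Une p by (simp add: U_def h1_def u1_def)
      moreover have "u2 p \<le> h2" using P1[OF finI NE2 d0, of p] Une p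
        by (simp add: U21 h2_def fsw fsw1)
      ultimately show "u1 p \<le> h1 \<and> u2 p \<le> h2" by simp
    qed
    have K2: "\<And>p. p \<in> U \<Longrightarrow> h1 \<le> u1 p \<or> h2 \<le> u2 p"
    proof -
      fix p assume p: "p \<in> U"
      consider "p \<in> L1" "p \<notin> L2" | "p \<in> L2" "p \<notin> L1" | "p \<in> C" using p by (auto simp: U_def C_def)
      thus "h1 \<le> u1 p \<or> h2 \<le> u2 p"
      proof cases
        case 1 thus ?thesis using P2[OF finI NE d0, of p] by (simp add: U_def h1_def u1_def)
      next
        case 2 thus ?thesis using P2[OF finI NE2 d0, of p] by (simp add: U21 h2_def fsw fsw1)
      next
        case 3
        have "av u1 C \<le> u1 p" using P3[OF finI NE d1', of p] 3 by (simp add: C_def u1_def)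
        moreover have "h1 \<le> av u1 C" using P4[OF NE d1'] 3 by (auto simp: C_def U_def h1_def u1_def)
        ultimately show ?thesis by simp
      qed
    qed
    have A0: "real ((k+1)*(k+2)) / 2 * (real k / 3 - H1) + H1^2 * H2 / 2 \<le> 0"
    proof (rule ineqA[OF k _ Une H1_def H2_def])
      show "U \<subseteq> Ak_index k" using UI by (simp add: I_def)
      fix p
      show "p \<in> Ak_index k \<Longrightarrow> p \<notin> U \<Longrightarrow> real (fst p) \<le> H1"
        using K1[of p] Kp by (simp add: I_def u1e hH1 divide_right_mono divide_le_cancel)
      show "p \<in> U \<Longrightarrow> H1 \<le> real (fst p) \<or> H2 \<le> real (snd p)"
        using K2[of p] Kp by (simp add: u1e u2e hH1 hH2 divide_le_cancel)
    qed
    have B0: "real ((k+1)*(k+2)) / 2 * (real k / 3 - H2) + H2^2 * H1 / 2 \<le> 0"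
    proof (rule ineqB[OF k _ Une H1_def H2_def])
      show "U \<subseteq> Ak_index k" using UI by (simp add: I_def)
      fix p
      show "p \<in> Ak_index k \<Longrightarrow> p \<notin> U \<Longrightarrow> real (snd p) \<le> H2"
        using K1[of p] Kp by (simp add: I_def u2e hH2 divide_le_cancel)
      show "p \<in> U \<Longrightarrow> H1 \<le> real (fst p) \<or> H2 \<le> real (snd p)"
        using K2[of p] Kp by (simp add: u1e u2e hH1 hH2 divide_le_cancel)
    qed
    have H0: "0 \<le> H1" "0 \<le> H2" by (auto simp: H1_def H2_def intro!: divide_nonneg_nonneg sum_nonneg)
    have L1b: "real k * x - 1/2 \<le> H1" by (rule alg_final[OF k x0 x1 xc H0 A0 B0])
    have L2b: "real k * x - 1/2 \<le> H2" by (rule alg_final[OF k x0 x1 xc H0(2,1) B0 A0])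
    have hb1: "x - 1 / (2 * real k) \<le> h1"
    proof -
      have "(real k * x - 1/2) / real k \<le> H1 / real k" using L1b Kp by (intro divide_right_mono) auto
      moreover have "(real k * x - 1/2) / real k = x - 1 / (2 * real k)" using Kp by (simp add: field_simps)
      ultimately show ?thesis by (simp add: hH1)
    qed
    have hb2: "x - 1 / (2 * real k) \<le> h2"
    proof -
      have "(real k * x - 1/2) / real k \<le> H2 / real k" using L2b Kp by (intro divide_right_mono) auto
      moreover have "(real k * x - 1/2) / real k = x - 1 / (2 * real k)" using Kp by (simp add: field_simps)
      ultimately show ?thesis by (simp add: hH2)
    qed
    define \<alpha> where "\<alpha> = (if C = {} then unif_avg U a else unif_avg C a)"
    have \<alpha>1: "fst \<alpha> = (if C = {} then h1 else av u1 C)"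
      by (simp add: \<alpha>_def fst_unif h1_def u1_def)
    have \<alpha>2: "snd \<alpha> = (if C = {} then h2 else av u2 C)"
      by (simp add: \<alpha>_def snd_unif h2_def u2_def)
    have hal: "h1 \<le> fst \<alpha>" "h2 \<le> snd \<alpha>"
    proof -
      show "h1 \<le> fst \<alpha>"
      proof (cases "C = {}")
        case False thus ?thesis using P4[OF NE d1'] by (simp add: \<alpha>1 C_def U_def h1_def u1_def)
      qed (simp add: \<alpha>1)
      show "h2 \<le> snd \<alpha>"
      proof (cases "C = {}")
        case False thus ?thesis using P4[OF NE2 d1'] by (simp add: \<alpha>2 U21 h2_def fsw)
      qed (simp add: \<alpha>2)
    qed
    have Tal: "0 \<le> fst \<alpha> \<and> 0 \<le> snd \<alpha> \<and> fst \<alpha> + snd \<alpha> \<le> 1"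
      using bounds[OF UI] bounds[OF CI] by (simp add: \<alpha>1 \<alpha>2 h1_def h2_def)
    have K4: "\<And>p. p \<in> I \<Longrightarrow> u1 p \<le> fst \<alpha> \<or> u2 p \<le> snd \<alpha>"
    proof -
      fix p assume pI: "p \<in> I"
      show "u1 p \<le> fst \<alpha> \<or> u2 p \<le> snd \<alpha>"
      proof (cases "p \<in> U")
        case False thus ?thesis using K1[OF pI] hal by force
      next
        case pU: True
        show ?thesis
        proof (cases "C = {}")
          case Ce: True
          consider "p \<in> L2" | "p \<in> L1" using pU by (auto simp: U_def)
          thus ?thesis
          proof cases
            case 1 thus ?thesis using P6[OF NE d1', of p] Ce by (simp add: \<alpha>1 C_def U_def h1_def u1_def)
          next
            case 2 thus ?thesis using P6[OF NE2 d1', of p] Ce by (simp add: \<alpha>2 U21 h2_def fsw fsw1 Int_commute C_def)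
          qed
        next
          case Cn: False
          consider "p \<in> L2" "p \<notin> L1" | "p \<in> L1" "p \<notin> L2" | "p \<in> C" using pU by (auto simp: U_def C_def)
          thus ?thesis
          proof cases
            case 1 thus ?thesis using P5[OF finI NE d1', of p] Cn by (simp add: \<alpha>1 C_def u1_def)
          next
            case 2 thus ?thesis using P5[OF finI NE2 d1', of p] Cn by (simp add: \<alpha>2 U21 fsw fsw1)
          next
            case 3
            have finC: "finite C" using CI finI finite_subset by blast
            have "\<forall>j\<in>C. av u1 C \<le> u1 j" using P3[OF finI NE d1'] by (simp add: C_def u1_def)
            hence "u1 p = av u1 C" using av_all_ge[OF finC _ 3] by blast
            thus ?thesis using Cn by (simp add: \<alpha>1)
          qed
        qed
      qed
    qed
    have eff: "1 - 1 / real k \<le> fst \<alpha> + snd \<alpha>"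
    proof -
      define c0 where "c0 = nat \<lfloor>real k * fst \<alpha>\<rfloor> + 1"
      define d0 where "d0 = nat \<lfloor>real k * snd \<alpha>\<rfloor> + 1"
      have a0: "0 \<le> real k * fst \<alpha>" "0 \<le> real k * snd \<alpha>" using Tal Kp by auto
      have c0r: "real c0 = of_int \<lfloor>real k * fst \<alpha>\<rfloor> + 1" using a0 by (simp add: c0_def)
      have d0r: "real d0 = of_int \<lfloor>real k * snd \<alpha>\<rfloor> + 1" using a0 by (simp add: d0_def)
      have "\<not> c0 + d0 \<le> k"
      proof
        assume "c0 + d0 \<le> k"
        hence "(c0, d0) \<in> I" by (simp add: I_def Ak_index_def)
        from K4[OF this] have "real c0 \<le> real k * fst \<alpha> \<or> real d0 \<le> real k * snd \<alpha>"
          using Kp by (simp add: u1e u2e divide_le_eq mult.commute)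
        moreover have "real k * fst \<alpha> < real c0" using c0r by linarith
        moreover have "real k * snd \<alpha> < real d0" using d0r by linarith
        ultimately show False by linarith
      qed
      hence "real k + 1 \<le> real c0 + real d0" by linarith
      hence "real k - 1 \<le> real k * fst \<alpha> + real k * snd \<alpha>" using c0r d0r by linarith
      thus ?thesis using Kp by (simp add: field_simps)
    qed
    obtain p where pS: "p \<in> S" and dp: "dist (fst \<alpha>, snd \<alpha>) p \<le> 1 / real k"
      using dist_lem[OF k x0 x25, of "fst \<alpha>" "snd \<alpha>"] Tal eff hb1 hb2 hal
      unfolding S_def by fastforce
    have dp': "dist \<alpha> p \<le> 1 / real k" using dp by simp
    show ?thesis
    proof (cases "C = {}")
      case True
      have ne: "\<not> (L1 = {} \<and> L2 = {})" using Une by (auto simp: U_def)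
      have "Out = \<alpha>" using True ne by (auto simp add: Out_def \<alpha>_def SA_outcome_def U_def C_def)
      hence "infdist Out S \<le> 1 / real k" using infdist_le[OF pS, of Out] dp' by simp
      thus ?thesis using d0 by (simp add: Out_def I_def a_def S_def)
    next
      case False
      define h where "h = unif_avg U a"
      have Out: "Out = (1 - \<delta>) *\<^sub>R \<alpha> + \<delta> *\<^sub>R h"
        using False by (auto simp: Out_def \<alpha>_def h_def SA_outcome_def U_def C_def)
      have hb: "0 \<le> fst h" "fst h \<le> 1" "0 \<le> snd h" "snd h \<le> 1"
        using bounds[OF UI] by (auto simp: h_def fst_unif snd_unif u1_def u2_def)
      have dh: "dist h (1/2, 1/2) \<le> 1" using dq hb by blast
      define r where "r = (1 - \<delta>) *\<^sub>R p + \<delta> *\<^sub>R (1/2, 1/2::real)"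
      have rS: "r \<in> S" unfolding r_def S_def
        using pS q d0 d1 unfolding S_def by (intro convexD[OF convex_convex_hull]) auto
      have "Out - r = (1 - \<delta>) *\<^sub>R (\<alpha> - p) + \<delta> *\<^sub>R (h - (1/2, 1/2))"
        by (simp add: Out r_def algebra_simps)
      hence "dist Out r \<le> (1 - \<delta>) * dist \<alpha> p + \<delta> * dist h (1/2, 1/2)"
        using d0 d1 by (simp add: dist_norm) (metis (no_types, opaque_lifting) abs_of_nonneg diff_ge_0_iff_ge less_le_not_le norm_scaleR norm_triangle_ineq order_less_imp_le)
      also have "\<dots> \<le> (1 - \<delta>) * (1 / real k) + \<delta> * 1"
        using dp' dh d0 d1 by (intro add_mono mult_left_mono) auto
      also have "\<dots> \<le> \<delta> + 1 / real k"
      proof -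
        have "(1 - \<delta>) * (1 / real k) \<le> 1 * (1 / real k)" using d0 by (intro mult_right_mono) auto
        thus ?thesis by simp
      qed
      finally have "infdist Out S \<le> \<delta> + 1 / real k" using infdist_le[OF rS, of Out] by linarith
      thus ?thesis by (simp add: Out_def I_def a_def S_def)
    qed
  qed
qed

end
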